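(* Consider the setting and algorithm described in the context, and assume: (A2) each $\mathcal{L}_j$ is differentiable with $\|\nabla\mathcal{L}_j(x)-\nabla\mathcal{L}_j(y)\|\le L\|x-y\|$ for all $x,y$; (A4-I) there are constants $\delta>0$ and $\tau\ge0$ with $\gamma(\rho)>3L+2L\delta\tau$ and $\rho>\frac{2L\tau}{\delta}$. Then for the iterates of EDANNI, for every $t\ge1$, with $\Delta^{(t)}:=x^{t+1}-x^t$, $\frac{\rho}{2}\|x^{t+1}-x^t\|^2+h(x^{t+1})-\frac{\rho}{2}\|x^t-x^{t-1}\|^2-h(x^t)\le-\Big\langle\nabla\mathcal{L}_1(x^{t+1})+\frac1m\sum_{j=1}^m\nabla\mathcal{L}_j(x^{t_j})-\nabla\mathcal{L}_1(x^{t_1}),\,\Delta^{(t)}\Big\rangle-\frac{\gamma(\rho)}{2}\|\Delta^{(t)}\|^2-\frac{\rho}{2}\|\Delta^{(t-1)}\|^2.$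
   Context: Problem setting: integers $m\ge 2$, $n\ge1$, $p\ge1$. For $j\in[m]$, $i\in[n]$, $l_{ji}:\mathbb{R}^p\to\mathbb{R}$ are smooth (possibly nonconvex) loss functions, and $h:\mathbb{R}^p\to\mathbb{R}\cup\{+\infty\}$ is proper, lower semicontinuous and convex. Let $\mathcal{L}_j(x)=\frac1n\sum_{i\in[n]}l_{ji}(x)$. Machine $1$ is the master. Algorithm EDANNI: given $x^0$ and $\rho\ge0$, at each iteration $t=0,1,\dots$ there is a set $\mathcal{A}_t\subseteq[m]$ of machines whose gradients arrive at iteration $t$, with $\mathcal{A}_0=[m]$; $t_j$ is the latest iteration $s\le t$ with $j\in\mathcal{A}_s$ (with $t_1=t$). The master updates $x^{t+1}=\arg\min_{x}\ \mathcal{L}_1(x)+h(x)+\frac{\rho}{2}\|x-x^t\|^2+\Big\langle \frac1m\sum_{j\in[m]}\nabla\mathcal{L}_j(x^{t_j})-\nabla\mathcal{L}_1(x^{t_1}),\,x-x^t\Big\rangle.$ $\gamma(\rho)$ denotes the convex (strong convexity) modulus of $x\mapsto h(x)+\frac{\rho}{2}\|x-x^t\|^2$. *)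

theory Defs
  imports "HOL-Analysis.Analysis" "HOL-Library.Extended_Real"
begin

definition proper_fun :: "('a \<Rightarrow> ereal) \<Rightarrow> bool" where
  "proper_fun f \<longleftrightarrow> (\<forall>x. f x \<noteq> -\<infinity>) \<and> (\<exists>x. f x \<noteq> \<infinity>)"

definition lsc_fun :: "('a::topological_space \<Rightarrow> ereal) \<Rightarrow> bool" where
  "lsc_fun f \<longleftrightarrow> (\<forall>x. f x \<le> Liminf (at x) f)"

definition strongly_convex_ereal :: "real \<Rightarrow> ('a::real_normed_vector \<Rightarrow> ereal) \<Rightarrow> bool" where
  "strongly_convex_ereal mu f \<longleftrightarrow>
     (\<forall>x y. \<forall>u\<in>{0<..<1::real}.
        f ((1 - u) *\<^sub>R x + u *\<^sub>R y)
          \<le> ereal (1 - u) * f x + ereal u * f y - ereal (mu / 2 * u * (1 - u) * (norm (x - y))\<^sup>2))"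

definition convex_ereal :: "('a::real_normed_vector \<Rightarrow> ereal) \<Rightarrow> bool" where
  "convex_ereal f \<longleftrightarrow> strongly_convex_ereal 0 f"

definition Lloc :: "nat \<Rightarrow> (nat \<Rightarrow> nat \<Rightarrow> 'a \<Rightarrow> real) \<Rightarrow> nat \<Rightarrow> 'a \<Rightarrow> real" where
  "Lloc n l j x = (1 / real n) * (\<Sum>i\<in>{1..n}. l j i x)"

text \<open>t_j: latest iteration s \<le> t at which machine j's gradient arrived; t_1 = t.\<close>
definition delay :: "(nat \<Rightarrow> nat set) \<Rightarrow> nat \<Rightarrow> nat \<Rightarrow> nat" where
  "delay A t j = (if j = 1 then t else (GREATEST s. s \<le> t \<and> j \<in> A s))"

definition corr :: "nat \<Rightarrow> (nat \<Rightarrow> 'a \<Rightarrow> 'a::real_vector) \<Rightarrow> (nat \<Rightarrow> nat set) \<Rightarrow> (nat \<Rightarrow> 'a) \<Rightarrow> nat \<Rightarrow> 'a" where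
  "corr m g A x t = (1 / real m) *\<^sub>R (\<Sum>j\<in>{1..m}. g j (x (delay A t j))) - g 1 (x (delay A t 1))"

end

theory Submission
  imports Defs
begin

lemma fin_aux:
  assumes "ereal a + (hw::ereal) + ereal b \<le> ereal c + hy + ereal d" "hy \<noteq> \<infinity>" "hy \<noteq> -\<infinity>" "hw \<noteq> -\<infinity>"
  shows "\<exists>r. hw = ereal r"
  using assms by (cases hw; cases hy) auto

lemma comb_aux:
  fixes hz hy hw L1z L1ys s cd N Y \<rho> \<gamma> :: real
  assumes "L1z + hz + (\<rho> / 2 * N + - cd) \<le> L1ys + hy + (\<rho> / 2 * Y + (s * cd - cd))"
    and "hy + \<rho> / 2 * Y \<le> (1 - s) * (hz + \<rho> / 2 * N) + s * hw - \<gamma> / 2 * s * (1 - s) * N"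
  shows "s * (hz + \<rho>/2 * N - hw) \<le> (L1ys - L1z) + s * cd - s * (\<gamma>/2 * (1 - s) * N)"
proof -
  have "((L1ys - L1z) + s * cd - s * (\<gamma>/2 * (1 - s) * N)) - s * (hz + \<rho>/2 * N - hw)
    = ((L1ys + hy + (\<rho> / 2 * Y + (s * cd - cd))) - (L1z + hz + (\<rho> / 2 * N + - cd)))
      + (((1 - s) * (hz + \<rho> / 2 * N) + s * hw - \<gamma> / 2 * s * (1 - s) * N) - (hy + \<rho> / 2 * Y))"
    by (simp add: field_simps)
  thus ?thesis using assms by linarith
qed

lemma dirderiv:
  fixes f :: "'a::euclidean_space \<Rightarrow> real"
  assumes "GDERIV f z :> g"
  shows "((\<lambda>s. (f (z + s *\<^sub>R d) - f z) / s) \<longlongrightarrow> inner g d) (at_right 0)"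
proof -
  have f: "(f has_derivative (\<lambda>v. inner g v)) (at z)"
    using assms by (simp add: gderiv_def inner_commute)
  have l: "((\<lambda>s::real. z + s *\<^sub>R d) has_derivative (\<lambda>s. s *\<^sub>R d)) (at 0)"
    by (auto intro!: derivative_eq_intros)
  have D: "((\<lambda>s::real. f (z + s *\<^sub>R d)) has_derivative (\<lambda>s. inner g (s *\<^sub>R d))) (at 0)"
    using has_derivative_compose[OF l, of f "\<lambda>v. inner g v"] f by simp
  have "((\<lambda>s::real. f (z + s *\<^sub>R d)) has_real_derivative (inner g d)) (at 0)"
    proof -
    have e: "(*) (inner g d) = (\<lambda>s. s * inner g d)" by (rule ext) simp
    show ?thesis unfolding has_field_derivative_def e using D by simp
  qed
  hence "((\<lambda>s. (f (z + s *\<^sub>R d) - f z) / s) \<longlongrightarrow> inner g d) (at 0)"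
    by (simp add: DERIV_def)
  thus ?thesis by (rule tendsto_mono[OF at_le, rotated]) simp
qed

theorem lemma1:
  fixes m n :: nat
    and l :: "nat \<Rightarrow> nat \<Rightarrow> 'a::euclidean_space \<Rightarrow> real"
    and gL :: "nat \<Rightarrow> 'a \<Rightarrow> 'a"
    and h :: "'a \<Rightarrow> ereal"
    and A :: "nat \<Rightarrow> nat set"
    and x :: "nat \<Rightarrow> 'a"
    and \<rho> \<gamma> L \<delta> \<tau> :: real
  assumes m: "m \<ge> 2" and n: "n \<ge> 1"
    and smooth: "\<And>j i. j \<in> {1..m} \<Longrightarrow> i \<in> {1..n} \<Longrightarrow> (\<forall>y. l j i differentiable (at y))"
    and h_proper: "proper_fun h" and h_lsc: "lsc_fun h" and h_convex: "convex_ereal h"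
    and A_sub: "\<And>t. A t \<subseteq> {1..m}" and A0: "A 0 = {1..m}"
    and rho: "\<rho> \<ge> 0"
    and gamma: "\<And>c. strongly_convex_ereal \<gamma> (\<lambda>y. h y + ereal (\<rho> / 2 * (norm (y - c))\<^sup>2))"
    and update: "\<And>t y. ereal (Lloc n l 1 (x (Suc t))) + h (x (Suc t))
                    + ereal (\<rho> / 2 * (norm (x (Suc t) - x t))\<^sup>2 + inner (corr m gL A x t) (x (Suc t) - x t))
                  \<le> ereal (Lloc n l 1 y) + h y
                    + ereal (\<rho> / 2 * (norm (y - x t))\<^sup>2 + inner (corr m gL A x t) (y - x t))"
    and A2_grad: "\<And>j y. j \<in> {1..m} \<Longrightarrow> GDERIV (Lloc n l j) y :> gL j y"
    and A2_lip: "\<And>j y z. j \<in> {1..m} \<Longrightarrow> norm (gL j y - gL j z) \<le> L * norm (y - z)"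
    and A4_delta: "\<delta> > 0" and A4_tau: "\<tau> \<ge> 0"
    and A4_gamma: "\<gamma> > 3 * L + 2 * L * \<delta> * \<tau>"
    and A4_rho: "\<rho> > 2 * L * \<tau> / \<delta>"
    and t: "t \<ge> 1"
  shows "ereal (\<rho> / 2 * (norm (x (t + 1) - x t))\<^sup>2) + h (x (t + 1))
           - ereal (\<rho> / 2 * (norm (x t - x (t - 1)))\<^sup>2) - h (x t)
         \<le> ereal (- inner (gL 1 (x (t + 1)) + corr m gL A x t) (x (t + 1) - x t)
                  - \<gamma> / 2 * (norm (x (t + 1) - x t))\<^sup>2
                  - \<rho> / 2 * (norm (x t - x (t - 1)))\<^sup>2)"

proof -
  define z where "z = x (Suc t)"
  define w where "w = x t"
  define c where "c = corr m gL A x t"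
  define L1 where "L1 = Lloc n l 1"
  define g where "g = gL 1 z"
  define d where "d = w - z"
  have tt: "Suc (t - 1) = t" using t by simp
  obtain y0 where y0: "h y0 \<noteq> \<infinity>" using h_proper unfolding proper_fun_def by blast
  have ninf: "\<And>y. h y \<noteq> -\<infinity>" using h_proper unfolding proper_fun_def by blast
  obtain hw where hw: "h w = ereal hw"
    using fin_aux[OF update[of "t - 1" y0, unfolded tt] y0 ninf ninf] w_def by blast
  obtain hz where hz: "h z = ereal hz"
    using fin_aux[OF update[of t y0] y0 ninf ninf] z_def by blast
  have "1 \<in> {1..m}" using m by simp
  hence gd: "GDERIV L1 z :> g" using A2_grad unfolding L1_def g_def by blast
  have key: "hz + \<rho>/2 * (norm d)\<^sup>2 - hw \<le> (L1 (z + s *\<^sub>R d) - L1 z) / s + inner c d - \<gamma>/2 * (1 - s) * (norm d)\<^sup>2"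
    if s: "s \<in> {0<..<1}" for s
  proof -
    define ys where "ys = (1 - s) *\<^sub>R z + s *\<^sub>R w"
    have ys2: "ys = z + s *\<^sub>R d" unfolding ys_def d_def by (simp add: algebra_simps)
    have U: "ereal (L1 z) + h z + ereal (\<rho> / 2 * (norm (z - w))\<^sup>2 + inner c (z - w))
       \<le> ereal (L1 ys) + h ys + ereal (\<rho> / 2 * (norm (ys - w))\<^sup>2 + inner c (ys - w))"
      using update[of t ys] unfolding z_def w_def c_def L1_def by simp
    have G: "h ys + ereal (\<rho> / 2 * (norm (ys - w))\<^sup>2)
      \<le> ereal (1 - s) * (h z + ereal (\<rho> / 2 * (norm (z - w))\<^sup>2)) + ereal s * (h w + ereal (\<rho> / 2 * (norm (w - w))\<^sup>2))
         - ereal (\<gamma> / 2 * s * (1 - s) * (norm (z - w))\<^sup>2)"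
      using gamma[of w] s unfolding strongly_convex_ereal_def ys_def by blast
    obtain hy where hy: "h ys = ereal hy"
      using G ninf[of ys] hz hw by (cases "h ys") auto
    have U': "L1 z + hz + (\<rho> / 2 * (norm (z - w))\<^sup>2 + inner c (z - w))
       \<le> L1 ys + hy + (\<rho> / 2 * (norm (ys - w))\<^sup>2 + inner c (ys - w))"
      using U hz hy by simp
    have G': "hy + \<rho> / 2 * (norm (ys - w))\<^sup>2
      \<le> (1 - s) * (hz + \<rho> / 2 * (norm (z - w))\<^sup>2) + s * hw - \<gamma> / 2 * s * (1 - s) * (norm (z - w))\<^sup>2"
      using G hz hw hy by simp
    have nzw: "norm (z - w) = norm d" unfolding d_def by (simp add: norm_minus_commute)
    have i1: "inner c (z - w) = - inner c d" unfolding d_def by (simp add: inner_diff_right)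
    have i2: "inner c (ys - w) = inner c (ys - z) - inner c d" unfolding d_def by (simp add: inner_diff_right)
    have i3: "inner c (ys - z) = s * inner c d" unfolding ys2 by simp
    have "s * (hz + \<rho>/2 * (norm d)\<^sup>2 - hw) \<le> (L1 ys - L1 z) + s * inner c d - s * (\<gamma>/2 * (1 - s) * (norm d)\<^sup>2)"
      using comb_aux[OF U'[unfolded nzw i1 i2 i3] G'[unfolded nzw]] unfolding ys2 .
    also have "\<dots> = s * ((L1 (z + s *\<^sub>R d) - L1 z) / s + inner c d - \<gamma>/2 * (1 - s) * (norm d)\<^sup>2)"
      using s ys2 by (simp add: field_simps)
    finally show ?thesis using s by (simp add: mult_le_cancel_left)
  qed
  have lim: "((\<lambda>s. (L1 (z + s *\<^sub>R d) - L1 z) / s + inner c d - \<gamma>/2 * (1 - s) * (norm d)\<^sup>2)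
      \<longlongrightarrow> inner g d + inner c d - \<gamma>/2 * (1 - 0) * (norm d)\<^sup>2) (at_right 0)"
    by (intro tendsto_intros dirderiv[OF gd])
  have ev: "eventually (\<lambda>s. hz + \<rho>/2 * (norm d)\<^sup>2 - hw \<le> (L1 (z + s *\<^sub>R d) - L1 z) / s + inner c d - \<gamma>/2 * (1 - s) * (norm d)\<^sup>2) (at_right (0::real))"
    using key eventually_at_right_real[of 0 1] by (auto elim: eventually_mono)
  have R: "hz + \<rho>/2 * (norm d)\<^sup>2 - hw \<le> inner g d + inner c d - \<gamma>/2 * (norm d)\<^sup>2"
    using tendsto_lowerbound[OF lim ev] by simp
  have nd: "norm (x (t + 1) - x t) = norm d" unfolding d_def z_def w_def by (simp add: norm_minus_commute)
  have id: "- inner (gL 1 (x (t + 1)) + corr m gL A x t) (x (t + 1) - x t) = inner g d + inner c d"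
    unfolding d_def z_def w_def g_def c_def by (simp add: inner_diff_right inner_add_left)
  show ?thesis
    unfolding nd id using R hz hw unfolding z_def w_def by simp
qed

end
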